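(* Let $\mathcal H$ be a separable infinite-dimensional Hilbert space, $\omega\in(0,1)$, and let $\mathfrak i$ be the principal Calkin space generated by the sequence $(\omega^{n-1})_{n\ge1}$. Then there exists $A\in\mathbf B(\mathcal H)$ such that $s(A)\in\mathfrak i$ and $\mathrm h(M_{A,A})\notin\mathfrak i$, where $M_{A,A}:\mathbf B(\mathcal H)\to\mathbf B(\mathcal H)$, $X\mapsto AXA$.
   Context: $c_0$: complex null sequences; $\alpha^\star$: non-increasing rearrangement of $(|\alpha_n|)$. A Calkin space is a linear subspace $\mathfrak i\subseteq c_0$ such that $\alpha\in\mathfrak i,\beta\in c_0,\beta^\star\le\alpha^\star$ imply $\beta\in\mathfrak i$; the principal Calkin space generated by $\alpha$ is the smallest Calkin space containing $\alpha$. $s(A)$ is the singular number sequence of a compact operator $A$. Hilbert numbers of a bounded operator $T:\mathcal X\to\mathcal Y$: $\mathrm h_n(T)=\sup s_n(ATB)$ over all Hilbert spaces $\mathcal H',\mathcal K'$ and contractions $A\in\mathbf B(\mathcal Y,\mathcal H')$, $B\in\mathbf B(\mathcal K',\mathcal X)$. *)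

theory Defs
  imports "HOL-Analysis.Analysis"
begin

text \<open>Sequences and the Hilbert space H = l2(N) of square-summable complex sequences
  (every separable infinite-dimensional complex Hilbert space is unitarily equivalent to it).\<close>

type_synonym vec = "nat \<Rightarrow> complex"
type_synonym op = "vec \<Rightarrow> vec"

definition l2 :: "vec set" where
  "l2 = {x. summable (\<lambda>n. (cmod (x n))^2)}"

definition l2norm :: "vec \<Rightarrow> real" where
  "l2norm x = sqrt (\<Sum>n. (cmod (x n))^2)"

definition bop :: "op set" where
  "bop = {T. (\<forall>x\<in>l2. T x \<in> l2) \<and> (\<forall>x. x \<notin> l2 \<longrightarrow> T x = (\<lambda>n. 0))
          \<and> (\<forall>a x y. x \<in> l2 \<longrightarrow> y \<in> l2 \<longrightarrow>
               T (\<lambda>n. a * x n + y n) = (\<lambda>n. a * T x n + T y n))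
          \<and> (\<exists>C. \<forall>x\<in>l2. l2norm (T x) \<le> C * l2norm x)}"

definition opnorm :: "op \<Rightarrow> real" where
  "opnorm T = Sup ((\<lambda>x. l2norm (T x)) ` {x\<in>l2. l2norm x \<le> 1})"

definition rank_le :: "op \<Rightarrow> nat \<Rightarrow> bool" where
  "rank_le F k = (\<exists>v :: nat \<Rightarrow> vec. (\<forall>i<k. v i \<in> l2) \<and>
       (\<forall>x\<in>l2. \<exists>c :: nat \<Rightarrow> complex. F x = (\<lambda>n. \<Sum>i<k. c i * v i n)))"

text \<open>Singular numbers (0-indexed: sing_num k A is s_{k+1}(A)), as approximation numbers.\<close>
definition sing_num :: "nat \<Rightarrow> op \<Rightarrow> real" where
  "sing_num k A = Inf ((\<lambda>F. opnorm (\<lambda>x n. A x n - F x n)) ` {F\<in>bop. rank_le F k})"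

text \<open>Contractions B(H) -> K' and K' -> B(H), with K' = l2, and B(H) carrying the operator norm.\<close>
definition contr_out :: "(op \<Rightarrow> vec) \<Rightarrow> bool" where
  "contr_out P = ((\<forall>X\<in>bop. P X \<in> l2)
     \<and> (\<forall>a X Y. X \<in> bop \<longrightarrow> Y \<in> bop \<longrightarrow>
          P (\<lambda>v n. a * X v n + Y v n) = (\<lambda>n. a * P X n + P Y n))
     \<and> (\<forall>X\<in>bop. l2norm (P X) \<le> opnorm X))"

definition contr_in :: "(vec \<Rightarrow> op) \<Rightarrow> bool" where
  "contr_in Q = ((\<forall>x\<in>l2. Q x \<in> bop)
     \<and> (\<forall>a x y. x \<in> l2 \<longrightarrow> y \<in> l2 \<longrightarrow>
          Q (\<lambda>n. a * x n + y n) = (\<lambda>v n. a * Q x v n + Q y v n))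
     \<and> (\<forall>x\<in>l2. opnorm (Q x) \<le> l2norm x))"

text \<open>Hilbert numbers (0-indexed) of a map Phi : B(H) -> B(H).\<close>
definition hilbert_num :: "nat \<Rightarrow> (op \<Rightarrow> op) \<Rightarrow> real" where
  "hilbert_num k Phi = Sup {sing_num k (\<lambda>x. P (Phi (Q x))) | P Q. contr_out P \<and> contr_in Q}"

definition c0 :: "vec set" where
  "c0 = {a. a \<longlonglongrightarrow> 0}"

definition rearr :: "vec \<Rightarrow> nat \<Rightarrow> real" where
  "rearr a n = Inf ((\<lambda>J. Sup ((\<lambda>k. cmod (a k)) ` (- J))) ` {J. finite J \<and> card J \<le> n})"

definition calkin_space :: "vec set \<Rightarrow> bool" where
  "calkin_space I = (I \<subseteq> c0 \<and> (\<lambda>n. 0) \<in> I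
     \<and> (\<forall>a\<in>I. \<forall>b\<in>I. \<forall>c. (\<lambda>n. c * a n + b n) \<in> I)
     \<and> (\<forall>a\<in>I. \<forall>b\<in>c0. (\<forall>n. rearr b n \<le> rearr a n) \<longrightarrow> b \<in> I))"

definition principal_calkin :: "vec \<Rightarrow> vec set" where
  "principal_calkin a = {b. \<forall>I. calkin_space I \<and> a \<in> I \<longrightarrow> b \<in> I}"

definition mult_op :: "op \<Rightarrow> op \<Rightarrow> op \<Rightarrow> op" where
  "mult_op A B X = A \<circ> X \<circ> B"

end

theory Submission
  imports Defs
begin

lemma l2norm_nonneg: "x \<in> l2 \<Longrightarrow> 0 \<le> l2norm x"
  unfolding l2norm_def l2_def by (simp add: suminf_nonneg)

lemma l2_sq: "x \<in> l2 \<Longrightarrow> (l2norm x)^2 = (\<Sum>n. (cmod (x n))^2)"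
  unfolding l2norm_def l2_def by (simp add: suminf_nonneg)

lemma l2_fin: assumes "\<And>n. n \<ge> N \<Longrightarrow> x n = 0" shows "x \<in> l2"
proof -
  have "summable (\<lambda>n. (cmod (x n))^2)"
    by (rule summable_finite[of "{..<N}"]) (use assms in auto)
  thus ?thesis unfolding l2_def by simp
qed

lemma l2_fin_sum: assumes "\<And>n. n \<ge> N \<Longrightarrow> x n = 0"
  shows "(l2norm x)^2 = (\<Sum>n<N. (cmod (x n))^2)"
proof -
  have "(\<Sum>n. (cmod (x n))^2) = (\<Sum>n<N. (cmod (x n))^2)"
    by (rule suminf_finite) (use assms in auto)
  thus ?thesis using l2_sq[OF l2_fin[OF assms]] by simp
qed

lemma l2_term: assumes "x \<in> l2" shows "cmod (x j) \<le> l2norm x"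
proof -
  have s: "summable (\<lambda>n. (cmod (x n))^2)" using assms unfolding l2_def by simp
  have "(\<Sum>n\<in>{j}. (cmod (x n))^2) \<le> (\<Sum>n. (cmod (x n))^2)"
    by (rule sum_le_suminf[OF s]) auto
  hence "(cmod (x j))^2 \<le> (\<Sum>n. (cmod (x n))^2)" by simp
  hence "sqrt ((cmod (x j))^2) \<le> l2norm x" unfolding l2norm_def using real_sqrt_le_mono by blast
  thus ?thesis by simp
qed

lemma zero_l2: "(\<lambda>n. 0) \<in> l2" "l2norm (\<lambda>n. 0) = 0"
  unfolding l2_def l2norm_def by auto

lemma sq2: "(p + q)^2 \<le> 2 * p^2 + 2 * (q::real)^2"
proof -
  have "(p+q)^2 + (p-q)^2 = 2*p^2+2*q^2" by algebra
  moreover have "0 \<le> (p-q)^2" by simp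
  ultimately show ?thesis by linarith
qed

lemma l2_diff: assumes "u \<in> l2" "v \<in> l2"
  shows "(\<lambda>n. u n - v n) \<in> l2" "l2norm (\<lambda>n. u n - v n) \<le> 2 * (l2norm u + l2norm v)"
proof -
  have su: "summable (\<lambda>n. (cmod (u n))^2)" and sv: "summable (\<lambda>n. (cmod (v n))^2)"
    using assms unfolding l2_def by auto
  have pw: "(cmod (u n - v n))^2 \<le> 2 * (cmod (u n))^2 + 2 * (cmod (v n))^2" for n
  proof -
    have "cmod (u n - v n) \<le> cmod (u n) + cmod (v n)" by (rule norm_triangle_ineq4)
    hence "(cmod (u n - v n))^2 \<le> (cmod (u n) + cmod (v n))^2"
      by (simp add: power_mono)
    also have "\<dots> \<le> 2 * (cmod (u n))^2 + 2 * (cmod (v n))^2"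
      using sq2[of "cmod (u n)" "cmod (v n)"] by simp
    finally show ?thesis .
  qed
  have s2: "summable (\<lambda>n. 2 * (cmod (u n))^2 + 2 * (cmod (v n))^2)"
    using su sv by (intro summable_add summable_mult) auto
  have sd: "summable (\<lambda>n. (cmod (u n - v n))^2)"
    by (rule summable_comparison_test[OF _ s2]) (use pw in auto)
  thus "(\<lambda>n. u n - v n) \<in> l2" unfolding l2_def by simp
  have dl2: "(\<lambda>n. u n - v n) \<in> l2" using sd unfolding l2_def by simp
  have "(l2norm (\<lambda>n. u n - v n))^2 = (\<Sum>n. (cmod (u n - v n))^2)" by (rule l2_sq[OF dl2])
  also have "(\<Sum>n. (cmod (u n - v n))^2) \<le> (\<Sum>n. 2 * (cmod (u n))^2 + 2 * (cmod (v n))^2)"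
    by (rule suminf_le[OF pw sd s2])
  also have "\<dots> = 2 * (l2norm u)^2 + 2 * (l2norm v)^2"
    using su sv l2_sq[OF assms(1)] l2_sq[OF assms(2)]
    by (subst suminf_add[symmetric]) (auto intro: summable_mult simp: suminf_mult)
  also have "\<dots> \<le> (2 * (l2norm u + l2norm v))^2"
    using l2norm_nonneg[OF assms(1)] l2norm_nonneg[OF assms(2)] by (simp add: power2_eq_square algebra_simps)
  finally have "(l2norm (\<lambda>n. u n - v n))^2 \<le> (2 * (l2norm u + l2norm v))^2" .
  thus "l2norm (\<lambda>n. u n - v n) \<le> 2 * (l2norm u + l2norm v)"
    by (rule power2_le_imp_le) (use l2norm_nonneg[OF assms(1)] l2norm_nonneg[OF assms(2)] in auto)
qed

definition bnd :: "op \<Rightarrow> real \<Rightarrow> bool" where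
  "bnd T B = (\<forall>x\<in>l2. l2norm x \<le> 1 \<longrightarrow> T x \<in> l2 \<and> l2norm (T x) \<le> B)"

lemma opnorm_upper: assumes "bnd T B" "x \<in> l2" "l2norm x \<le> 1"
  shows "l2norm (T x) \<le> opnorm T"
  unfolding opnorm_def
  by (rule cSup_upper) (use assms in \<open>auto simp: bnd_def bdd_above_def\<close>)

lemma opnorm_le: assumes "\<And>x. x \<in> l2 \<Longrightarrow> l2norm x \<le> 1 \<Longrightarrow> l2norm (T x) \<le> B"
  shows "opnorm T \<le> B"
  unfolding opnorm_def
  by (rule cSup_least) (use assms zero_l2 in auto)

lemma opnorm_nonneg: assumes "bnd T B" shows "0 \<le> opnorm T"
proof -
  have "l2norm (T (\<lambda>n. 0)) \<le> opnorm T" using opnorm_upper[OF assms zero_l2(1)] zero_l2(2) by simp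
  moreover have "0 \<le> l2norm (T (\<lambda>n. 0))" using assms zero_l2 l2norm_nonneg unfolding bnd_def by auto
  ultimately show ?thesis by linarith
qed

lemma bnd_diff: assumes "bnd T B1" "bnd F B2" shows "bnd (\<lambda>x n. T x n - F x n) (2*(B1+B2))"
  unfolding bnd_def
proof (intro ballI impI conjI)
  fix x assume x: "x \<in> l2" "l2norm x \<le> 1"
  have a: "T x \<in> l2" "l2norm (T x) \<le> B1" "F x \<in> l2" "l2norm (F x) \<le> B2"
    using assms x unfolding bnd_def by auto
  show "(\<lambda>n. T x n - F x n) \<in> l2" using l2_diff a by auto
  have "2 * (l2norm (T x) + l2norm (F x)) \<le> 2 * (B1 + B2)" using a(2,4) by simp
  thus "l2norm (\<lambda>n. T x n - F x n) \<le> 2 * (B1 + B2)" using l2_diff(2)[OF a(1,3)] by (rule order_trans[rotated])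
qed

lemma bop_bnd: assumes "X \<in> bop" shows "\<exists>B. bnd X B"
proof -
  obtain C where C: "\<forall>x\<in>l2. l2norm (X x) \<le> C * l2norm x" using assms unfolding bop_def by auto
  have "bnd X \<bar>C\<bar>" unfolding bnd_def
  proof (intro ballI impI conjI)
    fix x assume x: "x \<in> l2" "l2norm x \<le> 1"
    show "X x \<in> l2" using assms x unfolding bop_def by auto
    have "C * l2norm x \<le> \<bar>C\<bar> * l2norm x" using l2norm_nonneg[OF x(1)]
      by (simp add: mult_right_mono)
    also have "\<dots> \<le> \<bar>C\<bar> * 1" using x by (simp add: mult_left_le)
    finally have "C * l2norm x \<le> \<bar>C\<bar> * 1" .
    moreover have "l2norm (X x) \<le> C * l2norm x" using C x by auto
    ultimately show "l2norm (X x) \<le> \<bar>C\<bar>" by linarith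
  qed
  thus ?thesis by blast
qed

lemma zero_bop: "(\<lambda>x n. 0) \<in> bop"
  unfolding bop_def using zero_l2 by (auto intro!: exI[of _ 0])

lemma zero_rank: "rank_le (\<lambda>x n. 0) k"
  unfolding rank_le_def by (rule exI[of _ "\<lambda>i n. 0"]) (auto simp: zero_l2)

lemma sing_num_nonneg: assumes "bnd T B" shows "0 \<le> sing_num k T"
  unfolding sing_num_def
proof (rule cInf_greatest)
  show "(\<lambda>F. opnorm (\<lambda>x n. T x n - F x n)) ` {F \<in> bop. rank_le F k} \<noteq> {}"
  proof -
    have "(\<lambda>x n. 0) \<in> {F \<in> bop. rank_le F k}" using zero_bop zero_rank by simp
    thus ?thesis by blast
  qed
next
  fix y assume "y \<in> (\<lambda>F. opnorm (\<lambda>x n. T x n - F x n)) ` {F \<in> bop. rank_le F k}"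
  then obtain F where F: "F \<in> bop" "y = opnorm (\<lambda>x n. T x n - F x n)" by auto
  obtain B2 where "bnd F B2" using bop_bnd F by auto
  hence "bnd (\<lambda>x n. T x n - F x n) (2*(B+B2))" by (rule bnd_diff[OF assms(1)])
  thus "0 \<le> y" using F opnorm_nonneg by blast
qed

lemma sing_num_le: assumes "bnd T B" "F \<in> bop" "rank_le F k"
  shows "sing_num k T \<le> opnorm (\<lambda>x n. T x n - F x n)"
  unfolding sing_num_def
proof (rule cInf_lower)
  show "opnorm (\<lambda>x n. T x n - F x n) \<in> (\<lambda>F. opnorm (\<lambda>x n. T x n - F x n)) ` {F \<in> bop. rank_le F k}"
    using assms(2,3) by (intro imageI) simp
  show "bdd_below ((\<lambda>F. opnorm (\<lambda>x n. T x n - F x n)) ` {F \<in> bop. rank_le F k})"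
  proof (rule bdd_belowI[where m=0])
    fix y assume "y \<in> (\<lambda>F. opnorm (\<lambda>x n. T x n - F x n)) ` {F \<in> bop. rank_le F k}"
    then obtain F where F: "F \<in> bop" "y = opnorm (\<lambda>x n. T x n - F x n)" by auto
    obtain B2 where "bnd F B2" using bop_bnd F by auto
    hence "bnd (\<lambda>x n. T x n - F x n) (2*(B+B2))" by (rule bnd_diff[OF assms(1)])
    thus "0 \<le> y" unfolding F(2) by (rule opnorm_nonneg)
  qed
qed

lemma sing_num_le_opnorm: assumes "bnd T B" shows "sing_num k T \<le> opnorm T"
  using sing_num_le[OF assms zero_bop zero_rank] by simp

lemma sing_num_ge: assumes "\<And>F. F \<in> bop \<Longrightarrow> rank_le F k \<Longrightarrow> \<sigma> \<le> opnorm (\<lambda>x n. T x n - F x n)"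
  shows "\<sigma> \<le> sing_num k T"
  unfolding sing_num_def
proof (rule cInf_greatest)
  show "(\<lambda>F. opnorm (\<lambda>x n. T x n - F x n)) ` {F \<in> bop. rank_le F k} \<noteq> {}"
  proof -
    have "(\<lambda>x n. 0) \<in> {F \<in> bop. rank_le F k}" using zero_bop zero_rank by simp
    thus ?thesis by blast
  qed
qed (use assms in blast)

definition bdds :: "vec \<Rightarrow> bool" where
  "bdds a = (\<exists>K. \<forall>k. cmod (a k) \<le> K)"

definition Sfun :: "vec \<Rightarrow> nat set \<Rightarrow> real" where
  "Sfun a J = Sup ((\<lambda>k. cmod (a k)) ` (- J))"

lemma rearr_Sfun: "rearr a n = Inf ((\<lambda>J. Sfun a J) ` {J. finite J \<and> card J \<le> n})"
  unfolding rearr_def Sfun_def by simp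

lemma c0_bdds: assumes "a \<in> c0" shows "bdds a"
proof -
  have "a \<longlonglongrightarrow> 0" using assms unfolding c0_def by simp
  hence "Bseq a" by (intro convergent_imp_Bseq convergentI)
  thus ?thesis unfolding Bseq_def bdds_def by auto
qed

lemma ex_notin: "finite (J::nat set) \<Longrightarrow> \<exists>k. k \<notin> J"
  using ex_new_if_finite infinite_UNIV_nat by blast

lemma Sfun_upper: assumes "bdds a" "k \<notin> J" shows "cmod (a k) \<le> Sfun a J"
  unfolding Sfun_def
proof (rule cSup_upper)
  show "cmod (a k) \<in> (\<lambda>k. cmod (a k)) ` (- J)" using assms(2) by auto
  obtain K where "\<forall>k. cmod (a k) \<le> K" using assms(1) unfolding bdds_def by auto
  thus "bdd_above ((\<lambda>k. cmod (a k)) ` (- J))" by (intro bdd_aboveI[where M=K]) auto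
qed

lemma Sfun_le: assumes "finite J" "\<And>k. k \<notin> J \<Longrightarrow> cmod (a k) \<le> c" shows "Sfun a J \<le> c"
  unfolding Sfun_def
proof (rule cSup_least)
  obtain k where "k \<notin> J" using ex_notin[OF assms(1)] by auto
  thus "(\<lambda>k. cmod (a k)) ` (- J) \<noteq> {}" by auto
qed (use assms(2) in auto)

lemma Sfun_nonneg: assumes "bdds a" "finite J" shows "0 \<le> Sfun a J"
proof -
  obtain k where "k \<notin> J" using ex_notin[OF assms(2)] by auto
  hence "cmod (a k) \<le> Sfun a J" by (rule Sfun_upper[OF assms(1)])
  moreover have "0 \<le> cmod (a k)" by simp
  ultimately show ?thesis by linarith
qed

lemma rearr_lower: assumes "\<And>J. finite J \<Longrightarrow> card J \<le> n \<Longrightarrow> c \<le> Sfun a J"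
  shows "c \<le> rearr a n"
  unfolding rearr_Sfun
proof (rule cInf_greatest)
  have "{} \<in> {J. finite J \<and> card J \<le> n}" by simp
  thus "(\<lambda>J. Sfun a J) ` {J. finite J \<and> card J \<le> n} \<noteq> {}" by blast
qed (use assms in auto)

lemma rearr_upper: assumes "bdds a" "finite J" "card J \<le> n" shows "rearr a n \<le> Sfun a J"
  unfolding rearr_Sfun
proof (rule cInf_lower)
  show "Sfun a J \<in> (\<lambda>J. Sfun a J) ` {J. finite J \<and> card J \<le> n}" using assms(2,3) by auto
  show "bdd_below ((\<lambda>J. Sfun a J) ` {J. finite J \<and> card J \<le> n})"
    by (rule bdd_belowI[where m=0]) (use Sfun_nonneg[OF assms(1)] in auto)
qed

lemma bdds_comb: assumes "bdds a" "bdds b" shows "bdds (\<lambda>n. c * a n + b n)"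
proof -
  obtain K1 K2 where K: "\<forall>k. cmod (a k) \<le> K1" "\<forall>k. cmod (b k) \<le> K2"
    using assms unfolding bdds_def by auto
  have "cmod (c * a k + b k) \<le> cmod c * K1 + K2" for k
  proof -
    have "cmod (c * a k + b k) \<le> cmod c * cmod (a k) + cmod (b k)"
      by (metis norm_mult norm_triangle_ineq)
    also have "\<dots> \<le> cmod c * K1 + K2" using K by (intro add_mono mult_left_mono) auto
    finally show ?thesis .
  qed
  thus ?thesis unfolding bdds_def by blast
qed

lemma rearr_comb: assumes "bdds a" "bdds b"
  shows "rearr (\<lambda>n. c * a n + b n) (p + q) \<le> cmod c * rearr a p + rearr b q"
proof -
  define r where "r = rearr (\<lambda>n. c * a n + b n) (p + q)"
  have key: "r \<le> cmod c * Sfun a J1 + Sfun b J2"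
    if J: "finite J1" "card J1 \<le> p" "finite J2" "card J2 \<le> q" for J1 J2 :: "nat set"
  proof -
    have "r \<le> Sfun (\<lambda>n. c * a n + b n) (J1 \<union> J2)"
      unfolding r_def
    proof (rule rearr_upper[OF bdds_comb[OF assms]])
      show "finite (J1 \<union> J2)" using J by auto
      have "card (J1 \<union> J2) \<le> card J1 + card J2" by (rule card_Un_le)
      thus "card (J1 \<union> J2) \<le> p + q" using J by linarith
    qed
    also have "\<dots> \<le> cmod c * Sfun a J1 + Sfun b J2"
    proof (rule Sfun_le)
      show "finite (J1 \<union> J2)" using J by auto
      fix k assume k: "k \<notin> J1 \<union> J2"
      have "cmod (c * a k + b k) \<le> cmod c * cmod (a k) + cmod (b k)"
        by (metis norm_mult norm_triangle_ineq)
      also have "\<dots> \<le> cmod c * Sfun a J1 + Sfun b J2"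
        using k Sfun_upper[OF assms(1), of k J1] Sfun_upper[OF assms(2), of k J2]
        by (intro add_mono mult_left_mono) auto
      finally show "cmod (c * a k + b k) \<le> cmod c * Sfun a J1 + Sfun b J2" .
    qed
    finally show ?thesis .
  qed
  have step: "r - cmod c * rearr a p \<le> Sfun b J2" if J2: "finite J2" "card J2 \<le> q" for J2 :: "nat set"
  proof (cases "c = 0")
    case True
    have "r \<le> Sfun b J2" using key[of "{}" J2] J2 True by simp
    thus ?thesis using True by simp
  next
    case False
    hence cp: "cmod c > 0" by simp
    have "(r - Sfun b J2) / cmod c \<le> rearr a p"
    proof (rule rearr_lower)
      fix J1 :: "nat set" assume "finite J1" "card J1 \<le> p"
      hence "r - Sfun b J2 \<le> cmod c * Sfun a J1" using key[of J1 J2] J2 by linarith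
      thus "(r - Sfun b J2) / cmod c \<le> Sfun a J1" using cp by (simp add: divide_le_eq mult.commute)
    qed
    hence "r - Sfun b J2 \<le> cmod c * rearr a p" using cp by (simp add: divide_le_eq mult.commute)
    thus ?thesis by linarith
  qed
  have "r - cmod c * rearr a p \<le> rearr b q" by (rule rearr_lower) (use step in auto)
  thus ?thesis unfolding r_def by linarith
qed

lemma rearr_mono: assumes "bdds a" "\<And>k. cmod (b k) \<le> cmod (a k)"
  shows "rearr b n \<le> rearr a n"
proof -
  have bb: "bdds b" using assms unfolding bdds_def by (meson order_trans)
  show ?thesis
  proof (rule rearr_lower)
    fix J :: "nat set" assume J: "finite J" "card J \<le> n"
    have "rearr b n \<le> Sfun b J" by (rule rearr_upper[OF bb J])
    also have "\<dots> \<le> Sfun a J"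
    proof (rule Sfun_le[OF J(1)])
      fix k assume "k \<notin> J"
      thus "cmod (b k) \<le> Sfun a J" using assms(2)[of k] Sfun_upper[OF assms(1), of k J] by linarith
    qed
    finally show "rearr b n \<le> Sfun a J" .
  qed
qed

definition wseq :: "real \<Rightarrow> vec" where
  "wseq \<omega> = (\<lambda>k. complex_of_real (\<omega> ^ k))"

definition Iw :: "real \<Rightarrow> vec set" where
  "Iw \<omega> = {b \<in> c0. \<exists>C m. \<forall>n. rearr b (m * n) \<le> C * \<omega> ^ n}"

lemma wseq_c0: assumes "0 < \<omega>" "\<omega> < 1" shows "wseq \<omega> \<in> c0"
proof -
  have "(\<lambda>k. \<omega> ^ k) \<longlonglongrightarrow> 0" using assms by (intro LIMSEQ_power_zero) auto
  hence "(\<lambda>k. complex_of_real (\<omega> ^ k)) \<longlonglongrightarrow> complex_of_real 0" by (rule tendsto_of_real)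
  thus ?thesis unfolding c0_def wseq_def by simp
qed

lemma calkin_Iw: assumes "0 < \<omega>" "\<omega> < 1" shows "calkin_space (Iw \<omega>)"
  unfolding calkin_space_def
proof (intro conjI ballI allI impI)
  show "Iw \<omega> \<subseteq> c0" unfolding Iw_def by auto
  have z: "(\<lambda>n. 0) \<in> c0" unfolding c0_def by simp
  have "rearr (\<lambda>n. 0) (0 * n) \<le> 0 * \<omega> ^ n" for n
  proof -
    have "rearr (\<lambda>n. 0) (0 * n) \<le> Sfun (\<lambda>n. 0) {}"
      by (rule rearr_upper) (auto simp: bdds_def)
    also have "\<dots> \<le> 0" by (rule Sfun_le) auto
    finally show ?thesis by simp
  qed
  thus "(\<lambda>n. 0) \<in> Iw \<omega>" unfolding Iw_def using z by blast
next
  fix a b c assume a: "a \<in> Iw \<omega>" and b: "b \<in> Iw \<omega>"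
  obtain C1 m1 where 1: "\<forall>n. rearr a (m1 * n) \<le> C1 * \<omega> ^ n" "a \<in> c0" using a unfolding Iw_def by auto
  obtain C2 m2 where 2: "\<forall>n. rearr b (m2 * n) \<le> C2 * \<omega> ^ n" "b \<in> c0" using b unfolding Iw_def by auto
  have "(\<lambda>n. c * a n + b n) \<longlonglongrightarrow> c * 0 + 0" using 1(2) 2(2) unfolding c0_def
    by (intro tendsto_intros) auto
  hence cz: "(\<lambda>n. c * a n + b n) \<in> c0" unfolding c0_def by simp
  have "rearr (\<lambda>n. c * a n + b n) ((m1 + m2) * n) \<le> (cmod c * C1 + C2) * \<omega> ^ n" for n
  proof -
    have "rearr (\<lambda>n. c * a n + b n) ((m1 + m2) * n) = rearr (\<lambda>n. c * a n + b n) (m1 * n + m2 * n)"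
      by (simp add: algebra_simps)
    also have "\<dots> \<le> cmod c * rearr a (m1 * n) + rearr b (m2 * n)"
      by (rule rearr_comb[OF c0_bdds[OF 1(2)] c0_bdds[OF 2(2)]])
    also have "\<dots> \<le> cmod c * (C1 * \<omega> ^ n) + C2 * \<omega> ^ n"
      using 1(1) 2(1) by (intro add_mono mult_left_mono) auto
    finally show ?thesis by (simp add: algebra_simps)
  qed
  thus "(\<lambda>n. c * a n + b n) \<in> Iw \<omega>" unfolding Iw_def using cz by blast
next
  fix a b assume a: "a \<in> Iw \<omega>" and b: "b \<in> c0" and le: "\<forall>n. rearr b n \<le> rearr a n"
  obtain C m where "\<forall>n. rearr a (m * n) \<le> C * \<omega> ^ n" using a unfolding Iw_def by auto
  hence "\<forall>n. rearr b (m * n) \<le> C * \<omega> ^ n" using le by (meson order_trans)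
  thus "b \<in> Iw \<omega>" unfolding Iw_def using b by blast
qed

lemma wseq_Iw: assumes "0 < \<omega>" "\<omega> < 1" shows "wseq \<omega> \<in> Iw \<omega>"
proof -
  have "rearr (wseq \<omega>) (1 * n) \<le> 1 * \<omega> ^ n" for n
  proof -
    have "rearr (wseq \<omega>) (1 * n) \<le> Sfun (wseq \<omega>) {..<n}"
      by (rule rearr_upper) (use c0_bdds[OF wseq_c0[OF assms]] in auto)
    also have "\<dots> \<le> \<omega> ^ n"
    proof (rule Sfun_le)
      fix k assume "k \<notin> {..<n}"
      hence "n \<le> k" by simp
      hence "\<omega> ^ k \<le> \<omega> ^ n" using assms by (intro power_decreasing) auto
      thus "cmod (wseq \<omega> k) \<le> \<omega> ^ n" unfolding wseq_def using assms by (simp add: norm_power)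
    qed simp
    finally show ?thesis by simp
  qed
  thus ?thesis unfolding Iw_def using wseq_c0[OF assms] by blast
qed

lemma principal_Iw: assumes "0 < \<omega>" "\<omega> < 1" "b \<in> principal_calkin (wseq \<omega>)" shows "b \<in> Iw \<omega>"
  using assms calkin_Iw wseq_Iw unfolding principal_calkin_def by blast

lemma principal_intro: assumes "0 < \<omega>" "\<omega> < 1" "b \<in> c0" "\<And>k. cmod (b k) \<le> \<omega> ^ k"
  shows "b \<in> principal_calkin (wseq \<omega>)"
  unfolding principal_calkin_def
proof (intro CollectI allI impI)
  fix I assume I: "calkin_space I \<and> wseq \<omega> \<in> I"
  have "rearr b n \<le> rearr (wseq \<omega>) n" for n
    by (rule rearr_mono) (use c0_bdds[OF wseq_c0[OF assms(1,2)]] assms(1,4) in \<open>auto simp: wseq_def norm_power\<close>)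
  thus "b \<in> I" using I assms(3) unfolding calkin_space_def by blast
qed

lemma l2_dom: assumes "x \<in> l2" "0 \<le> c" "\<And>n. cmod (y n) \<le> c * cmod (x n)"
  shows "y \<in> l2" "l2norm y \<le> c * l2norm x"
proof -
  have sx: "summable (\<lambda>n. (cmod (x n))^2)" using assms unfolding l2_def by simp
  have pw: "(cmod (y n))^2 \<le> c^2 * (cmod (x n))^2" for n
  proof -
    have "(cmod (y n))^2 \<le> (c * cmod (x n))^2" using assms(3)[of n] by (simp add: power_mono)
    thus ?thesis by (simp add: power_mult_distrib)
  qed
  have s2: "summable (\<lambda>n. c^2 * (cmod (x n))^2)" using sx by (rule summable_mult)
  have sy: "summable (\<lambda>n. (cmod (y n))^2)"
    by (rule summable_comparison_test[OF _ s2]) (use pw in auto)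
  thus yl: "y \<in> l2" unfolding l2_def by simp
  have "(l2norm y)^2 = (\<Sum>n. (cmod (y n))^2)" by (rule l2_sq[OF yl])
  also have "\<dots> \<le> (\<Sum>n. c^2 * (cmod (x n))^2)" by (rule suminf_le[OF pw sy s2])
  also have "\<dots> = c^2 * (l2norm x)^2" using sx l2_sq[OF assms(1)] by (simp add: suminf_mult)
  also have "\<dots> = (c * l2norm x)^2" by (simp add: power_mult_distrib)
  finally show "l2norm y \<le> c * l2norm x"
    by (rule power2_le_imp_le) (use assms(2) l2norm_nonneg[OF assms(1)] in simp)
qed

lemma l2_comb: assumes "x \<in> l2" "y \<in> l2" shows "(\<lambda>n. a * x n + y n) \<in> l2"
proof -
  have "(\<lambda>n. - a * x n) \<in> l2" using l2_dom(1)[OF assms(1), of "cmod a"] by (simp add: norm_mult)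
  hence "(\<lambda>n. y n - (- a * x n)) \<in> l2" using l2_diff(1)[OF assms(2)] by blast
  thus ?thesis by (simp add: add.commute)
qed

lemma bop_zero: assumes "X \<in> bop" shows "X (\<lambda>n. 0) = (\<lambda>n. 0)"
proof -
  have "X (\<lambda>n. 1 * 0 + 0) = (\<lambda>n. 1 * X (\<lambda>n. 0) n + X (\<lambda>n. 0) n)"
    using assms zero_l2 unfolding bop_def by blast
  hence eq: "X (\<lambda>n. 0) = (\<lambda>n. X (\<lambda>n. 0) n + X (\<lambda>n. 0) n)" by simp
  have "\<And>n. X (\<lambda>n. 0) n = X (\<lambda>n. 0) n + X (\<lambda>n. 0) n" using fun_cong[OF eq] by simp
  thus ?thesis by (intro ext) simp
qed

lemma bop_l2: "X \<in> bop \<Longrightarrow> x \<in> l2 \<Longrightarrow> X x \<in> l2"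
  unfolding bop_def by blast

lemma bop_out: "X \<in> bop \<Longrightarrow> x \<notin> l2 \<Longrightarrow> X x = (\<lambda>n. 0)"
  unfolding bop_def by blast

lemma bop_lin: "X \<in> bop \<Longrightarrow> x \<in> l2 \<Longrightarrow> y \<in> l2 \<Longrightarrow> X (\<lambda>n. a * x n + y n) = (\<lambda>n. a * X x n + X y n)"
  unfolding bop_def by blast

lemma bop_bound: assumes "X \<in> bop" shows "\<exists>C\<ge>0. \<forall>x\<in>l2. l2norm (X x) \<le> C * l2norm x"
proof -
  obtain C where C: "\<forall>x\<in>l2. l2norm (X x) \<le> C * l2norm x" using assms unfolding bop_def by auto
  have "\<forall>x\<in>l2. l2norm (X x) \<le> \<bar>C\<bar> * l2norm x"
  proof
    fix x assume x: "x \<in> l2"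
    have "C * l2norm x \<le> \<bar>C\<bar> * l2norm x" using l2norm_nonneg[OF x] by (simp add: mult_right_mono)
    moreover have "l2norm (X x) \<le> C * l2norm x" using C x by blast
    ultimately show "l2norm (X x) \<le> \<bar>C\<bar> * l2norm x" by linarith
  qed
  thus ?thesis by (intro exI[of _ "\<bar>C\<bar>"]) auto
qed

lemma comp_bop: assumes X: "X \<in> bop" and Y: "Y \<in> bop" shows "X \<circ> Y \<in> bop"
  unfolding bop_def
proof (intro CollectI conjI ballI allI impI)
  fix x assume "x \<in> l2" thus "(X \<circ> Y) x \<in> l2" using bop_l2 X Y by simp
next
  fix x assume "x \<notin> l2" thus "(X \<circ> Y) x = (\<lambda>n. 0)" using bop_out[OF Y] bop_zero[OF X] by simp
next
  fix a x y assume "x \<in> l2" "y \<in> l2"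
  thus "(X \<circ> Y) (\<lambda>n. a * x n + y n) = (\<lambda>n. a * (X \<circ> Y) x n + (X \<circ> Y) y n)"
    using bop_lin[OF Y] bop_lin[OF X] bop_l2[OF Y] by simp
next
  obtain C1 where C1: "C1 \<ge> 0" "\<forall>x\<in>l2. l2norm (X x) \<le> C1 * l2norm x" using bop_bound[OF X] by auto
  obtain C2 where C2: "C2 \<ge> 0" "\<forall>x\<in>l2. l2norm (Y x) \<le> C2 * l2norm x" using bop_bound[OF Y] by auto
  have "\<forall>x\<in>l2. l2norm ((X \<circ> Y) x) \<le> (C1 * C2) * l2norm x"
  proof
    fix x assume x: "x \<in> l2"
    have "l2norm (X (Y x)) \<le> C1 * l2norm (Y x)" using C1 bop_l2[OF Y x] by auto
    also have "\<dots> \<le> C1 * (C2 * l2norm x)" using C1(1) C2 x by (intro mult_left_mono) auto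
    finally show "l2norm ((X \<circ> Y) x) \<le> (C1 * C2) * l2norm x" by (simp add: mult.assoc)
  qed
  thus "\<exists>C. \<forall>x\<in>l2. l2norm ((X \<circ> Y) x) \<le> C * l2norm x" by blast
qed

definition Aop :: "real \<Rightarrow> op" where
  "Aop \<omega> = (\<lambda>x. if x \<in> l2 then (\<lambda>n. complex_of_real (\<omega> ^ n) * x n) else (\<lambda>n. 0))"

lemma Aop_contr: assumes "0 < \<omega>" "\<omega> < 1" "x \<in> l2"
  shows "Aop \<omega> x \<in> l2" "l2norm (Aop \<omega> x) \<le> l2norm x"
proof -
  have "cmod (Aop \<omega> x n) \<le> 1 * cmod (x n)" for n
  proof -
    have "\<omega> ^ n \<le> 1" using assms by (simp add: power_le_one)
    hence "\<omega> ^ n * cmod (x n) \<le> 1 * cmod (x n)" by (intro mult_right_mono) auto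
    thus ?thesis using assms unfolding Aop_def by (simp add: norm_mult norm_power)
  qed
  from l2_dom[OF assms(3), of 1, OF _ this] show "Aop \<omega> x \<in> l2" "l2norm (Aop \<omega> x) \<le> l2norm x" by auto
qed

lemma Aop_bop: assumes "0 < \<omega>" "\<omega> < 1" shows "Aop \<omega> \<in> bop"
  unfolding bop_def
proof (intro CollectI conjI ballI allI impI)
  fix x assume "x \<in> l2" thus "Aop \<omega> x \<in> l2" using Aop_contr[OF assms] by blast
next
  fix x assume "x \<notin> l2" thus "Aop \<omega> x = (\<lambda>n. 0)" unfolding Aop_def by simp
next
  fix a x y assume "x \<in> l2" "y \<in> l2"
  thus "Aop \<omega> (\<lambda>n. a * x n + y n) = (\<lambda>n. a * Aop \<omega> x n + Aop \<omega> y n)"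
    using l2_comb unfolding Aop_def by (auto simp: algebra_simps)
next
  show "\<exists>C. \<forall>x\<in>l2. l2norm (Aop \<omega> x) \<le> C * l2norm x"
    using Aop_contr[OF assms] by (intro exI[of _ 1]) auto
qed

definition evec :: "nat \<Rightarrow> vec" where
  "evec j = (\<lambda>n. if n = j then 1 else 0)"

lemma evec_l2: "evec j \<in> l2" "l2norm (evec j) = 1"
proof -
  show "evec j \<in> l2" by (rule l2_fin[of "Suc j"]) (auto simp: evec_def)
  have "(l2norm (evec j))^2 = (\<Sum>n<Suc j. (cmod (evec j n))^2)"
    by (rule l2_fin_sum) (auto simp: evec_def)
  also have "\<dots> = 1" by (simp add: evec_def)
  finally show "l2norm (evec j) = 1" using l2norm_nonneg[OF \<open>evec j \<in> l2\<close>]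
    by (metis abs_of_nonneg power2_eq_1_iff real_sqrt_abs real_sqrt_one)
qed

definition Ftr :: "real \<Rightarrow> nat \<Rightarrow> op" where
  "Ftr \<omega> k = (\<lambda>x. if x \<in> l2 then (\<lambda>n. if n < k then complex_of_real (\<omega> ^ n) * x n else 0) else (\<lambda>n. 0))"

lemma Ftr_bop: assumes "0 < \<omega>" "\<omega> < 1" shows "Ftr \<omega> k \<in> bop"
  unfolding bop_def
proof (intro CollectI conjI ballI allI impI)
  fix x assume "x \<in> l2" thus "Ftr \<omega> k x \<in> l2" unfolding Ftr_def by (intro l2_fin[of k]) auto
next
  fix x assume "x \<notin> l2" thus "Ftr \<omega> k x = (\<lambda>n. 0)" unfolding Ftr_def by simp
next
  fix a x y assume "x \<in> l2" "y \<in> l2"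
  thus "Ftr \<omega> k (\<lambda>n. a * x n + y n) = (\<lambda>n. a * Ftr \<omega> k x n + Ftr \<omega> k y n)"
    using l2_comb unfolding Ftr_def by (auto simp: algebra_simps)
next
  have "\<forall>x\<in>l2. l2norm (Ftr \<omega> k x) \<le> 1 * l2norm x"
  proof
    fix x assume x: "x \<in> l2"
    show "l2norm (Ftr \<omega> k x) \<le> 1 * l2norm x"
    proof (rule l2_dom(2)[OF x])
      fix n
      have "\<omega> ^ n \<le> 1" using assms by (simp add: power_le_one)
      hence "\<omega> ^ n * cmod (x n) \<le> 1 * cmod (x n)" by (intro mult_right_mono) auto
      thus "cmod (Ftr \<omega> k x n) \<le> 1 * cmod (x n)" using assms x unfolding Ftr_def by (simp add: norm_mult norm_power)
    qed simp
  qed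
  thus "\<exists>C. \<forall>x\<in>l2. l2norm (Ftr \<omega> k x) \<le> C * l2norm x" by blast
qed

lemma delta_sum: "(\<Sum>i<(k::nat). g i * (if n = i then 1 else 0)) = (if n < k then g n else (0::complex))"
  by (induct k) (auto simp: less_Suc_eq)

lemma Ftr_rank: "rank_le (Ftr \<omega> k) k"
  unfolding rank_le_def
proof (intro exI[of _ evec] conjI allI impI ballI)
  fix i show "evec i \<in> l2" by (rule evec_l2)
next
  fix x :: vec assume x: "x \<in> l2"
  show "\<exists>c. Ftr \<omega> k x = (\<lambda>n. \<Sum>i<k. c i * evec i n)"
    by (rule exI[of _ "\<lambda>i. complex_of_real (\<omega> ^ i) * x i"]) (use x in \<open>auto simp: Ftr_def evec_def delta_sum\<close>)
qed

lemma sing_A: assumes "0 < \<omega>" "\<omega> < 1"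
  shows "0 \<le> sing_num k (Aop \<omega>)" "sing_num k (Aop \<omega>) \<le> \<omega> ^ k"
proof -
  have bA: "bnd (Aop \<omega>) 1" unfolding bnd_def
  proof (intro ballI impI conjI)
    fix x assume x: "x \<in> l2" "l2norm x \<le> 1"
    show "Aop \<omega> x \<in> l2" using Aop_contr[OF assms x(1)] by simp
    show "l2norm (Aop \<omega> x) \<le> 1" using Aop_contr[OF assms x(1)] x(2) by linarith
  qed
  show "0 \<le> sing_num k (Aop \<omega>)" by (rule sing_num_nonneg[OF bA])
  have "sing_num k (Aop \<omega>) \<le> opnorm (\<lambda>x n. Aop \<omega> x n - Ftr \<omega> k x n)"
    by (rule sing_num_le[OF bA Ftr_bop[OF assms] Ftr_rank])
  also have "\<dots> \<le> \<omega> ^ k"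
  proof (rule opnorm_le)
    fix x assume x: "x \<in> l2" "l2norm x \<le> 1"
    have "l2norm (\<lambda>n. Aop \<omega> x n - Ftr \<omega> k x n) \<le> \<omega> ^ k * l2norm x"
    proof (rule l2_dom(2)[OF x(1)])
      fix n
      show "cmod (Aop \<omega> x n - Ftr \<omega> k x n) \<le> \<omega> ^ k * cmod (x n)"
      proof (cases "n < k")
        case False
        hence "\<omega> ^ n \<le> \<omega> ^ k" using assms by (intro power_decreasing) auto
        hence "\<omega> ^ n * cmod (x n) \<le> \<omega> ^ k * cmod (x n)" by (intro mult_right_mono) auto
        thus ?thesis using False x assms unfolding Aop_def Ftr_def by (simp add: norm_mult norm_power)
      qed (use x assms in \<open>simp add: Aop_def Ftr_def\<close>)
    qed (use assms in simp)
    also have "\<dots> \<le> \<omega> ^ k * 1" using x assms by (intro mult_left_mono) auto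
    finally show "l2norm (\<lambda>n. Aop \<omega> x n - Ftr \<omega> k x n) \<le> \<omega> ^ k" by simp
  qed
  finally show "sing_num k (Aop \<omega>) \<le> \<omega> ^ k" .
qed

lemma first_part: assumes "0 < \<omega>" "\<omega> < 1"
  shows "(\<lambda>k. complex_of_real (sing_num k (Aop \<omega>))) \<in> principal_calkin (\<lambda>k. complex_of_real (\<omega> ^ k))"
proof -
  have le: "cmod (complex_of_real (sing_num k (Aop \<omega>))) \<le> \<omega> ^ k" for k
    using sing_A[OF assms, of k] by simp
  have ev: "\<forall>\<^sub>F k in sequentially. norm (complex_of_real (sing_num k (Aop \<omega>))) \<le> \<omega> ^ k"
    by (intro always_eventually allI le)
  have lim: "(\<lambda>k. \<omega> ^ k) \<longlonglongrightarrow> 0" using assms by (intro LIMSEQ_power_zero) auto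
  have c: "(\<lambda>k. complex_of_real (sing_num k (Aop \<omega>))) \<in> c0"
    unfolding c0_def using Lim_null_comparison[OF ev lim] by simp
  have "(\<lambda>k. complex_of_real (sing_num k (Aop \<omega>))) \<in> principal_calkin (wseq \<omega>)"
    by (rule principal_intro[OF assms c]) (rule le)
  thus ?thesis unfolding wseq_def .
qed

definition Qm :: "nat \<Rightarrow> vec \<Rightarrow> op" where
  "Qm N x = (\<lambda>y. if y \<in> l2 then (\<lambda>i. if i < N then (\<Sum>j<N. x (i*N + j) * y j) / of_nat (N*N) else 0) else (\<lambda>n. 0))"

definition Pm :: "nat \<Rightarrow> op \<Rightarrow> vec" where
  "Pm N X = (\<lambda>n. if n < N*N then X (evec (n mod N)) (n div N) / of_nat N else 0)"

lemma Q_est: assumes "N > 0" "x \<in> l2" "y \<in> l2"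
  shows "Qm N x y \<in> l2" "l2norm (Qm N x y) \<le> l2norm x * l2norm y"
proof -
  define z where "z = Qm N x y"
  have z0: "\<And>i. i \<ge> N \<Longrightarrow> z i = 0" unfolding z_def Qm_def using assms by auto
  show zl: "Qm N x y \<in> l2" using l2_fin[OF z0] unfolding z_def .
  define B where "B = l2norm x * l2norm y"
  have B0: "0 \<le> B" unfolding B_def using l2norm_nonneg assms by simp
  have zi: "cmod (z i) \<le> B / N" for i
  proof (cases "i < N")
    case True
    have "cmod (\<Sum>j<N. x (i*N + j) * y j) \<le> (\<Sum>j<N. cmod (x (i*N + j) * y j))" by (rule norm_sum)
    also have "\<dots> \<le> of_nat (card {..<N}) * B"
    proof (rule sum_bounded_above)
      fix j assume "j \<in> {..<N}"
      show "cmod (x (i*N + j) * y j) \<le> B" unfolding B_def norm_mult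
        using l2_term[OF assms(2)] l2_term[OF assms(3)] l2norm_nonneg[OF assms(2)] by (intro mult_mono) auto
    qed
    finally have s: "cmod (\<Sum>j<N. x (i*N + j) * y j) \<le> N * B" by simp
    have "cmod (z i) = cmod (\<Sum>j<N. x (i*N + j) * y j) / (N * N)"
      unfolding z_def Qm_def using True assms by (simp add: norm_divide norm_mult)
    also have "\<dots> \<le> (N * B) / (N * N)" using s by (intro divide_right_mono) auto
    also have "\<dots> = B / N" using assms by simp
    finally show ?thesis .
  next
    case False thus ?thesis using z0 B0 by simp
  qed
  have "(l2norm z)^2 = (\<Sum>i<N. (cmod (z i))^2)" by (rule l2_fin_sum) (use z0 in auto)
  also have "\<dots> \<le> of_nat (card {..<N}) * (B / N)^2"
    by (rule sum_bounded_above) (use zi in \<open>auto intro: power_mono\<close>)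
  also have "\<dots> = B^2 / N" using assms by (simp add: power2_eq_square)
  also have "\<dots> \<le> B^2"
  proof -
    have "B^2 * 1 \<le> B^2 * real N" using assms by (intro mult_left_mono) auto
    thus ?thesis using assms by (simp add: divide_le_eq)
  qed
  finally show "l2norm (Qm N x y) \<le> l2norm x * l2norm y"
    unfolding z_def B_def[symmetric] by (rule power2_le_imp_le) (use B0 in simp)
qed

lemma Q_contr: assumes "N > 0" shows "contr_in (Qm N)"
  unfolding contr_in_def
proof (intro conjI ballI allI impI)
  fix x assume x: "x \<in> l2"
  show "Qm N x \<in> bop"
    unfolding bop_def
  proof (intro CollectI conjI ballI allI impI)
    fix y assume "y \<in> l2" thus "Qm N x y \<in> l2" using Q_est assms x by blast
  next
    fix y assume "y \<notin> l2" thus "Qm N x y = (\<lambda>n. 0)" unfolding Qm_def by simp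
  next
    fix a y1 y2 assume "y1 \<in> l2" "y2 \<in> l2"
    thus "Qm N x (\<lambda>n. a * y1 n + y2 n) = (\<lambda>n. a * Qm N x y1 n + Qm N x y2 n)"
      using l2_comb unfolding Qm_def
      by (auto simp: distrib_left sum.distrib sum_distrib_left mult.left_commute add_divide_distrib)
  next
    show "\<exists>C. \<forall>y\<in>l2. l2norm (Qm N x y) \<le> C * l2norm y" using Q_est[OF assms x] by blast
  qed
  show "opnorm (Qm N x) \<le> l2norm x"
  proof (rule opnorm_le)
    fix y assume y: "y \<in> l2" "l2norm y \<le> 1"
    have "l2norm (Qm N x y) \<le> l2norm x * l2norm y" using Q_est[OF assms x y(1)] by simp
    also have "\<dots> \<le> l2norm x * 1" using y l2norm_nonneg[OF x] by (intro mult_left_mono) auto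
    finally show "l2norm (Qm N x y) \<le> l2norm x" by simp
  qed
next
  fix a x1 x2 assume "x1 \<in> l2" "x2 \<in> l2"
  show "Qm N (\<lambda>n. a * x1 n + x2 n) = (\<lambda>v n. a * Qm N x1 v n + Qm N x2 v n)"
    unfolding Qm_def
    by (auto intro!: ext simp: distrib_right sum.distrib sum_distrib_left mult.assoc add_divide_distrib)
qed

lemma P_contr: assumes "N > 0" shows "contr_out (Pm N)"
  unfolding contr_out_def
proof (intro conjI ballI allI impI)
  fix X assume X: "X \<in> bop"
  show "Pm N X \<in> l2" by (rule l2_fin[of "N*N"]) (auto simp: Pm_def)
  obtain B where bX: "bnd X B" using bop_bnd[OF X] by auto
  have o0: "0 \<le> opnorm X" by (rule opnorm_nonneg[OF bX])
  have ent: "cmod (X (evec j) i) \<le> opnorm X" for i j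
  proof -
    have "cmod (X (evec j) i) \<le> l2norm (X (evec j))" by (rule l2_term[OF bop_l2[OF X evec_l2(1)]])
    also have "\<dots> \<le> opnorm X" by (rule opnorm_upper[OF bX evec_l2(1)]) (simp add: evec_l2(2))
    finally show ?thesis .
  qed
  have pn: "cmod (Pm N X n) \<le> opnorm X / N" for n
    unfolding Pm_def using ent o0 by (auto simp: norm_divide intro: divide_right_mono)
  have "(l2norm (Pm N X))^2 = (\<Sum>n<N*N. (cmod (Pm N X n))^2)" by (rule l2_fin_sum) (auto simp: Pm_def)
  also have "\<dots> \<le> of_nat (card {..<N*N}) * (opnorm X / N)^2"
    by (rule sum_bounded_above) (use pn in \<open>auto intro: power_mono\<close>)
  also have "\<dots> = (opnorm X)^2" using assms by (simp add: power2_eq_square)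
  finally show "l2norm (Pm N X) \<le> opnorm X" by (rule power2_le_imp_le) (use o0 in simp)
next
  fix a X Y
  show "Pm N (\<lambda>v n. a * X v n + Y v n) = (\<lambda>n. a * Pm N X n + Pm N Y n)"
    unfolding Pm_def by (auto intro!: ext simp: add_divide_distrib)
qed

lemma delta_sum2: "(j::nat) < k \<Longrightarrow> (\<Sum>i<k. g i * (if i = j then 1 else 0)) = (g j :: complex)"
  by (induct k) (auto simp: less_Suc_eq)

definition wt :: "real \<Rightarrow> nat \<Rightarrow> nat \<Rightarrow> complex" where
  "wt \<omega> N n = complex_of_real (\<omega> ^ (n div N) * \<omega> ^ (n mod N)) / of_nat (N*N*N)"

lemma Aop_apply: "z \<in> l2 \<Longrightarrow> Aop \<omega> z i = complex_of_real (\<omega> ^ i) * z i"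
  unfolding Aop_def by simp

lemma T_formula: assumes "N > 0" "0 < \<omega>" "\<omega> < 1"
  shows "Pm N (mult_op (Aop \<omega>) (Aop \<omega>) (Qm N x)) = (\<lambda>n. if n < N*N then wt \<omega> N n * x n else 0)"
proof (rule ext)
  fix n
  show "Pm N (mult_op (Aop \<omega>) (Aop \<omega>) (Qm N x)) n = (if n < N*N then wt \<omega> N n * x n else 0)"
  proof (cases "n < N*N")
    case True
    define i where "i = n div N"
    define j where "j = n mod N"
    have i: "i < N" unfolding i_def using True by (simp add: less_mult_imp_div_less)
    have j: "j < N" unfolding j_def using assms by simp
    have nij: "i * N + j = n" unfolding i_def j_def by simp
    have Ae: "Aop \<omega> (evec j) = (\<lambda>m. complex_of_real (\<omega> ^ m) * evec j m)"
      unfolding Aop_def using evec_l2 by simp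
    have Ael: "Aop \<omega> (evec j) \<in> l2" using Aop_contr[OF assms(2,3) evec_l2(1)] by simp
    have sm: "(\<Sum>j'<N. x (i'*N + j') * (complex_of_real (\<omega> ^ j') * evec j j'))
              = x (i'*N + j) * complex_of_real (\<omega> ^ j)" for i'
    proof -
      have "(\<Sum>j'<N. x (i'*N + j') * (complex_of_real (\<omega> ^ j') * evec j j'))
           = (\<Sum>j'<N. (x (i'*N + j') * complex_of_real (\<omega> ^ j')) * (if j' = j then 1 else 0))"
        unfolding evec_def by (simp add: mult.assoc)
      also have "\<dots> = x (i'*N + j) * complex_of_real (\<omega> ^ j)" by (rule delta_sum2[OF j])
      finally show ?thesis .
    qed
    have Q1: "Qm N x (Aop \<omega> (evec j)) = (\<lambda>i'. if i' < N then x (i'*N + j) * complex_of_real (\<omega> ^ j) / of_nat (N*N) else 0)"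
    proof -
      have "Qm N x (Aop \<omega> (evec j)) = (\<lambda>i. if i < N then (\<Sum>j'<N. x (i*N + j') * Aop \<omega> (evec j) j') / of_nat (N*N) else 0)"
        unfolding Qm_def using Ael by simp
      also have "\<dots> = (\<lambda>i'. if i' < N then x (i'*N + j) * complex_of_real (\<omega> ^ j) / of_nat (N*N) else 0)"
        unfolding Ae sm by simp
      finally show ?thesis .
    qed
    have Q1l: "Qm N x (Aop \<omega> (evec j)) \<in> l2" by (rule l2_fin[of N]) (simp add: Q1)
    have "Pm N (mult_op (Aop \<omega>) (Aop \<omega>) (Qm N x)) n
        = Aop \<omega> (Qm N x (Aop \<omega> (evec j))) i / of_nat N"
      unfolding Pm_def mult_op_def using True i_def j_def by simp
    also have "\<dots> = complex_of_real (\<omega> ^ i) * (x n * complex_of_real (\<omega> ^ j) / of_nat (N*N)) / of_nat N"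
      unfolding Aop_apply[OF Q1l] using i nij by (simp add: Q1)
    also have "\<dots> = wt \<omega> N n * x n"
      unfolding wt_def i_def[symmetric] j_def[symmetric] of_real_mult of_nat_mult
      by (simp add: times_divide_eq_right times_divide_eq_left divide_divide_eq_left mult_ac)
    finally show ?thesis using True by simp
  next
    case False thus ?thesis unfolding Pm_def by simp
  qed
qed

lemma linalg: "finite S \<Longrightarrow> card S > k \<Longrightarrow>
  \<exists>la. (\<exists>t\<in>S. la t \<noteq> 0) \<and> (\<forall>i<k. (\<Sum>t\<in>S. la t * c t i) = (0::complex))"
proof (induction k arbitrary: S c)
  case 0
  hence "S \<noteq> {}" by auto
  then obtain t where "t \<in> S" by blast
  thus ?case by (intro exI[of _ "\<lambda>_. 1"]) auto
next
  case (Suc k)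
  show ?case
  proof (cases "\<forall>t\<in>S. c t k = 0")
    case True
    obtain la where l: "\<exists>t\<in>S. la t \<noteq> 0" "\<forall>i<k. (\<Sum>t\<in>S. la t * c t i) = 0"
      using Suc.IH[of S c] Suc.prems by auto
    have "\<forall>i<Suc k. (\<Sum>t\<in>S. la t * c t i) = 0"
    proof (intro allI impI)
      fix i assume "i < Suc k"
      then consider "i < k" | "i = k" by linarith
      thus "(\<Sum>t\<in>S. la t * c t i) = 0" using l True by cases auto
    qed
    thus ?thesis using l by blast
  next
    case False
    then obtain t0 where t0: "t0 \<in> S" "c t0 k \<noteq> 0" by auto
    define S' where "S' = S - {t0}"
    have fS': "finite S'" using Suc.prems unfolding S'_def by auto
    have cS': "card S' > k" using Suc.prems t0 unfolding S'_def by (simp add: card_Diff_singleton)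
    define d where "d t i = c t i - c t k / c t0 k * c t0 i" for t i
    obtain \<mu> where mu: "\<exists>t\<in>S'. \<mu> t \<noteq> 0" "\<forall>i<k. (\<Sum>t\<in>S'. \<mu> t * d t i) = 0"
      using Suc.IH[OF fS' cS', of d] by auto
    define G where "G = (\<Sum>t\<in>S'. \<mu> t * c t k)"
    define la where "la = \<mu>(t0 := - G / c t0 k)"
    have eq: "(\<Sum>t\<in>S. la t * c t i) = 0" if i: "i < Suc k" for i
    proof -
      have dz: "(\<Sum>t\<in>S'. \<mu> t * d t i) = 0"
      proof (cases "i < k")
        case True thus ?thesis using mu by auto
      next
        case False
        hence "i = k" using i by simp
        thus ?thesis using t0 unfolding d_def by simp
      qed
      have "(\<Sum>t\<in>S'. \<mu> t * c t i) = (\<Sum>t\<in>S'. \<mu> t * d t i + \<mu> t * c t k * (c t0 i / c t0 k))"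
        by (intro sum.cong refl) (simp add: d_def ring_distribs)
      also have "\<dots> = (\<Sum>t\<in>S'. \<mu> t * d t i) + (\<Sum>t\<in>S'. \<mu> t * c t k) * (c t0 i / c t0 k)"
        by (simp only: sum.distrib sum_distrib_right)
      also have "\<dots> = G * (c t0 i / c t0 k)" using dz unfolding G_def by simp
      finally have s': "(\<Sum>t\<in>S'. \<mu> t * c t i) = G * (c t0 i / c t0 k)" .
      have "(\<Sum>t\<in>S. la t * c t i) = la t0 * c t0 i + (\<Sum>t\<in>S'. la t * c t i)"
        unfolding S'_def using Suc.prems(1) t0(1) by (simp add: sum.remove)
      also have "(\<Sum>t\<in>S'. la t * c t i) = (\<Sum>t\<in>S'. \<mu> t * c t i)"
        unfolding la_def S'_def by (intro sum.cong) auto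
      also have "la t0 = - G / c t0 k" unfolding la_def by simp
      finally show ?thesis using s' by simp
    qed
    have "\<exists>t\<in>S. la t \<noteq> 0" using mu(1) unfolding la_def S'_def by auto
    thus ?thesis using eq by blast
  qed
qed

lemma linalg_norm: assumes "finite S" "card S > k"
  shows "\<exists>la. (\<Sum>t\<in>S. (cmod (la t))^2) = 1 \<and> (\<forall>i<k. (\<Sum>t\<in>S. la t * c t i) = (0::complex))"
proof -
  obtain la where l: "\<exists>t\<in>S. la t \<noteq> 0" "\<forall>i<k. (\<Sum>t\<in>S. la t * c t i) = 0"
    using linalg[OF assms] by blast
  define R where "R = (\<Sum>t\<in>S. (cmod (la t))^2)"
  obtain t0 where t0: "t0 \<in> S" "la t0 \<noteq> 0" using l(1) by blast
  have Rp: "R > 0" unfolding R_def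
    by (rule sum_pos2[OF assms(1) t0(1)]) (use t0(2) in auto)
  define r where "r = sqrt R"
  have rp: "r > 0" unfolding r_def using Rp by simp
  have r2: "r^2 = R" unfolding r_def using Rp by simp
  define la2 where "la2 t = la t / complex_of_real r" for t
  have "(\<Sum>t\<in>S. (cmod (la2 t))^2) = (\<Sum>t\<in>S. (cmod (la t))^2 / r^2)"
    unfolding la2_def using rp by (simp add: norm_divide power_divide)
  also have "\<dots> = 1" using Rp unfolding r2 R_def[symmetric] by (simp add: sum_divide_distrib[symmetric] R_def)
  finally have n1: "(\<Sum>t\<in>S. (cmod (la2 t))^2) = 1" .
  have "\<forall>i<k. (\<Sum>t\<in>S. la2 t * c t i) = 0"
  proof (intro allI impI)
    fix i assume "i < k"
    have "(\<Sum>t\<in>S. la2 t * c t i) = (\<Sum>t\<in>S. la t * c t i) / complex_of_real r"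
      unfolding la2_def by (simp add: sum_divide_distrib)
    thus "(\<Sum>t\<in>S. la2 t * c t i) = 0" using l(2) \<open>i < k\<close> by simp
  qed
  thus ?thesis using n1 by blast
qed

lemma lin_sum: assumes "F \<in> bop" "\<And>t. u t \<in> l2"
  shows "(\<lambda>n. \<Sum>t<(m::nat). a t * u t n) \<in> l2 \<and> F (\<lambda>n. \<Sum>t<m. a t * u t n) = (\<lambda>n. \<Sum>t<m. a t * F (u t) n)"
proof (induction m)
  case 0
  thus ?case using zero_l2 bop_zero[OF assms(1)] by simp
next
  case (Suc m)
  have e: "(\<lambda>n. \<Sum>t<Suc m. a t * u t n) = (\<lambda>n. a m * u m n + (\<Sum>t<m. a t * u t n))" by (simp add: add.commute)
  have e2: "(\<lambda>n. \<Sum>t<Suc m. a t * F (u t) n) = (\<lambda>n. a m * F (u m) n + (\<Sum>t<m. a t * F (u t) n))" by (simp add: add.commute)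
  show ?case unfolding e e2
    using Suc.IH assms l2_comb bop_lin[OF assms(1) assms(2)[of m], of "\<lambda>n. \<Sum>t<m. a t * u t n"] by auto
qed

definition sig :: "real \<Rightarrow> nat \<Rightarrow> real" where
  "sig \<omega> N = \<omega> ^ (N - 1) * \<omega> ^ (N - 1) / real (N*N*N)"

lemma wt_bounds: assumes "N > 0" "0 < \<omega>" "\<omega> < 1" "n < N*N"
  shows "sig \<omega> N \<le> cmod (wt \<omega> N n)" "cmod (wt \<omega> N n) \<le> 1"
proof -
  have c: "cmod (wt \<omega> N n) = \<omega> ^ (n div N) * \<omega> ^ (n mod N) / real (N*N*N)"
    unfolding wt_def using assms by (simp add: norm_divide norm_mult norm_power)
  have "n div N < N" using assms by (simp add: less_mult_imp_div_less)
  hence "n div N \<le> N - 1" by linarith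
  hence "\<omega> ^ (N - 1) \<le> \<omega> ^ (n div N)" using assms by (intro power_decreasing) auto
  moreover have "\<omega> ^ (N - 1) \<le> \<omega> ^ (n mod N)"
  proof -
    have "n mod N < N" using assms by simp
    hence "n mod N \<le> N - 1" by linarith
    thus ?thesis using assms by (intro power_decreasing) auto
  qed
  ultimately have "\<omega> ^ (N - 1) * \<omega> ^ (N - 1) \<le> \<omega> ^ (n div N) * \<omega> ^ (n mod N)"
    using assms by (intro mult_mono) auto
  thus "sig \<omega> N \<le> cmod (wt \<omega> N n)" unfolding c sig_def by (intro divide_right_mono) auto
  have p1: "\<omega> ^ (n div N) \<le> 1" "\<omega> ^ (n mod N) \<le> 1" using assms by (simp_all add: power_le_one)
  have "\<omega> ^ (n div N) * \<omega> ^ (n mod N) \<le> 1 * 1"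
    by (rule mult_mono[OF p1]) (use assms in auto)
  moreover have "1 \<le> real (N*N*N)"
  proof -
    have r: "1 \<le> real N" using assms by simp
    have "1 * 1 * 1 \<le> real N * real N * real N"
      by (rule mult_mono[OF mult_mono[OF r r]]) (use r in auto)
    thus ?thesis by simp
  qed
  ultimately show "cmod (wt \<omega> N n) \<le> 1" unfolding c by (simp add: divide_le_eq)
qed

definition Tf :: "real \<Rightarrow> nat \<Rightarrow> op" where
  "Tf \<omega> N = (\<lambda>x n. if n < N*N then wt \<omega> N n * x n else 0)"

lemma Tf_bnd: assumes "N > 0" "0 < \<omega>" "\<omega> < 1" shows "bnd (Tf \<omega> N) 1"
  unfolding bnd_def
proof (intro ballI impI)
  fix x assume x: "x \<in> l2" "l2norm x \<le> 1"
  have d: "cmod (Tf \<omega> N x n) \<le> 1 * cmod (x n)" for n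
  proof (cases "n < N*N")
    case True
    have "cmod (wt \<omega> N n) * cmod (x n) \<le> 1 * cmod (x n)"
      by (rule mult_right_mono[OF wt_bounds(2)[OF assms True]]) simp
    thus ?thesis using True unfolding Tf_def by (simp add: norm_mult)
  next
    case False thus ?thesis unfolding Tf_def by simp
  qed
  show "Tf \<omega> N x \<in> l2 \<and> l2norm (Tf \<omega> N x) \<le> 1" using l2_dom[OF x(1) _ d] x by auto
qed

lemma Tf_lower: assumes "N > 0" "0 < \<omega>" "\<omega> < 1" "k < N*N"
  shows "sig \<omega> N \<le> sing_num k (Tf \<omega> N)"
proof (rule sing_num_ge)
  fix F assume F: "F \<in> bop" "rank_le F k"
  obtain v where v: "\<forall>i<k. v i \<in> l2" "\<forall>x\<in>l2. \<exists>c. F x = (\<lambda>n. \<Sum>i<k. c i * v i n)"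
    using F(2) unfolding rank_le_def by blast
  have "\<forall>t. \<exists>c. F (evec t) = (\<lambda>n. \<Sum>i<k. c i * v i n)" using v(2) evec_l2(1) by blast
  hence "\<exists>cc. \<forall>t. F (evec t) = (\<lambda>n. \<Sum>i<k. cc t i * v i n)" by (rule choice)
  then obtain cc where cc: "\<And>t. F (evec t) = (\<lambda>n. \<Sum>i<k. cc t i * v i n)" by blast
  define K where "K = N*N"
  obtain la where l: "(\<Sum>t\<in>{..<K}. (cmod (la t))^2) = 1" "\<forall>i<k. (\<Sum>t\<in>{..<K}. la t * cc t i) = 0"
    using linalg_norm[of "{..<K}" k cc] assms(4) unfolding K_def by auto
  define x where "x = (\<lambda>n. \<Sum>t<K. la t * evec t n)"
  have xe: "x n = (if n < K then la n else 0)" for n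
    unfolding x_def evec_def by (rule delta_sum)
  have xl: "x \<in> l2" by (rule l2_fin[of K]) (simp add: xe)
  have "(l2norm x)^2 = (\<Sum>n<K. (cmod (x n))^2)" by (rule l2_fin_sum) (simp add: xe)
  also have "\<dots> = 1" using l(1) by (simp add: xe)
  finally have x1: "l2norm x = 1" using l2norm_nonneg[OF xl] by (simp add: power2_eq_1_iff)
  have "F x = (\<lambda>n. \<Sum>t<K. la t * F (evec t) n)"
    unfolding x_def using lin_sum[where u=evec and a=la and m=K, OF F(1) evec_l2(1)] by blast
  also have "\<dots> = (\<lambda>n. \<Sum>i<k. (\<Sum>t<K. la t * cc t i) * v i n)"
  proof (rule ext)
    fix n
    have "(\<Sum>t<K. la t * F (evec t) n) = (\<Sum>t<K. la t * (\<Sum>i<k. cc t i * v i n))" unfolding cc by simp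
    also have "\<dots> = (\<Sum>t<K. \<Sum>i<k. la t * cc t i * v i n)" by (simp add: sum_distrib_left mult.assoc)
    also have "\<dots> = (\<Sum>i<k. \<Sum>t<K. la t * cc t i * v i n)" by (rule sum.swap)
    also have "\<dots> = (\<Sum>i<k. (\<Sum>t<K. la t * cc t i) * v i n)" by (simp add: sum_distrib_right)
    finally show "(\<Sum>t<K. la t * F (evec t) n) = (\<Sum>i<k. (\<Sum>t<K. la t * cc t i) * v i n)" .
  qed
  also have "\<dots> = (\<lambda>n. 0)" using l(2) by simp
  finally have Fx: "F x = (\<lambda>n. 0)" .
  obtain B where bF: "bnd F B" using bop_bnd[OF F(1)] by auto
  have bD: "bnd (\<lambda>x n. Tf \<omega> N x n - F x n) (2*(1+B))" by (rule bnd_diff[OF Tf_bnd[OF assms(1-3)] bF])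
  have Tl: "Tf \<omega> N x \<in> l2" using Tf_bnd[OF assms(1-3)] xl x1 unfolding bnd_def by auto
  have "(\<Sum>n<K. (sig \<omega> N)^2 * (cmod (la n))^2) = (sig \<omega> N)^2 * (\<Sum>n<K. (cmod (la n))^2)"
    by (rule sum_distrib_left[symmetric])
  hence "(sig \<omega> N)^2 = (\<Sum>n<K. (sig \<omega> N)^2 * (cmod (la n))^2)" using l(1) by simp
  also have "\<dots> \<le> (\<Sum>n<K. (cmod (Tf \<omega> N x n))^2)"
  proof (rule sum_mono)
    fix n assume "n \<in> {..<K}"
    hence n: "n < N*N" unfolding K_def by simp
    have s0: "0 \<le> sig \<omega> N" unfolding sig_def using assms by (intro divide_nonneg_nonneg mult_nonneg_nonneg) auto
    have "sig \<omega> N * cmod (la n) \<le> cmod (wt \<omega> N n) * cmod (la n)"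
      using wt_bounds(1)[OF assms(1-3) n] by (intro mult_right_mono) auto
    hence "(sig \<omega> N * cmod (la n))^2 \<le> (cmod (wt \<omega> N n) * cmod (la n))^2"
      using s0 by (intro power_mono) auto
    thus "(sig \<omega> N)^2 * (cmod (la n))^2 \<le> (cmod (Tf \<omega> N x n))^2"
      using n unfolding Tf_def xe K_def by (simp add: norm_mult power_mult_distrib)
  qed
  also have "\<dots> = (l2norm (Tf \<omega> N x))^2"
    by (rule l2_fin_sum[symmetric]) (simp add: Tf_def K_def)
  finally have "sig \<omega> N \<le> l2norm (Tf \<omega> N x)"
    by (rule power2_le_imp_le) (rule l2norm_nonneg[OF Tl])
  also have "\<dots> = l2norm (\<lambda>n. Tf \<omega> N x n - F x n)" by (simp add: Fx)
  also have "\<dots> \<le> opnorm (\<lambda>x n. Tf \<omega> N x n - F x n)"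
    by (rule opnorm_upper[OF bD xl]) (simp add: x1)
  finally show "sig \<omega> N \<le> opnorm (\<lambda>x n. Tf \<omega> N x n - F x n)" .
qed

lemma hil_T_bnd: assumes "0 < \<omega>" "\<omega> < 1" "contr_out P" "contr_in Q"
  shows "bnd (\<lambda>x. P (mult_op (Aop \<omega>) (Aop \<omega>) (Q x))) 1"
  unfolding bnd_def
proof (intro ballI impI conjI)
  fix x assume x: "x \<in> l2" "l2norm x \<le> 1"
  have X: "Q x \<in> bop" "opnorm (Q x) \<le> l2norm x" using assms(4) x(1) unfolding contr_in_def by auto
  have A: "Aop \<omega> \<in> bop" by (rule Aop_bop[OF assms(1,2)])
  have Y: "mult_op (Aop \<omega>) (Aop \<omega>) (Q x) \<in> bop"
    unfolding mult_op_def by (intro comp_bop A X(1))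
  obtain BX where bX: "bnd (Q x) BX" using bop_bnd[OF X(1)] by auto
  have oY: "opnorm (mult_op (Aop \<omega>) (Aop \<omega>) (Q x)) \<le> 1"
  proof (rule opnorm_le)
    fix y assume y: "y \<in> l2" "l2norm y \<le> 1"
    have Ay: "Aop \<omega> y \<in> l2" "l2norm (Aop \<omega> y) \<le> l2norm y" using Aop_contr[OF assms(1,2) y(1)] by auto
    have Ay1: "l2norm (Aop \<omega> y) \<le> 1" using Ay(2) y(2) by linarith
    have XAy: "Q x (Aop \<omega> y) \<in> l2" using bop_l2[OF X(1) Ay(1)] .
    have "l2norm (Q x (Aop \<omega> y)) \<le> opnorm (Q x)" by (rule opnorm_upper[OF bX Ay(1) Ay1])
    hence n1: "l2norm (Q x (Aop \<omega> y)) \<le> 1" using X(2) x(2) by linarith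
    have "l2norm (Aop \<omega> (Q x (Aop \<omega> y))) \<le> l2norm (Q x (Aop \<omega> y))" using Aop_contr[OF assms(1,2) XAy] by simp
    thus "l2norm (mult_op (Aop \<omega>) (Aop \<omega>) (Q x) y) \<le> 1" unfolding mult_op_def using n1 by simp
  qed
  show "P (mult_op (Aop \<omega>) (Aop \<omega>) (Q x)) \<in> l2" using assms(3) Y unfolding contr_out_def by blast
  have "l2norm (P (mult_op (Aop \<omega>) (Aop \<omega>) (Q x))) \<le> opnorm (mult_op (Aop \<omega>) (Aop \<omega>) (Q x))"
    using assms(3) Y unfolding contr_out_def by blast
  thus "l2norm (P (mult_op (Aop \<omega>) (Aop \<omega>) (Q x))) \<le> 1" using oY by linarith
qed

lemma T_eq: assumes "N > 0" "0 < \<omega>" "\<omega> < 1"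
  shows "(\<lambda>x. Pm N (mult_op (Aop \<omega>) (Aop \<omega>) (Qm N x))) = Tf \<omega> N"
  unfolding Tf_def using T_formula[OF assms] by (intro ext) simp

lemma hil_bounds: assumes "0 < \<omega>" "\<omega> < 1"
  shows "hilbert_num k (mult_op (Aop \<omega>) (Aop \<omega>)) \<le> 1"
    "\<And>N. N > 0 \<Longrightarrow> k < N*N \<Longrightarrow> sig \<omega> N \<le> hilbert_num k (mult_op (Aop \<omega>) (Aop \<omega>))"
proof -
  define H where "H = {sing_num k (\<lambda>x. P (mult_op (Aop \<omega>) (Aop \<omega>) (Q x))) | P Q. contr_out P \<and> contr_in Q}"
  have hn: "hilbert_num k (mult_op (Aop \<omega>) (Aop \<omega>)) = Sup H" unfolding hilbert_num_def H_def by simp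
  have le1: "h \<le> 1" if "h \<in> H" for h
  proof -
    obtain P Q where PQ: "contr_out P" "contr_in Q" "h = sing_num k (\<lambda>x. P (mult_op (Aop \<omega>) (Aop \<omega>) (Q x)))"
      using \<open>h \<in> H\<close> unfolding H_def by blast
    have b: "bnd (\<lambda>x. P (mult_op (Aop \<omega>) (Aop \<omega>) (Q x))) 1" by (rule hil_T_bnd[OF assms PQ(1,2)])
    have "h \<le> opnorm (\<lambda>x. P (mult_op (Aop \<omega>) (Aop \<omega>) (Q x)))" unfolding PQ(3) by (rule sing_num_le_opnorm[OF b])
    also have "\<dots> \<le> 1" by (rule opnorm_le) (use b in \<open>auto simp: bnd_def\<close>)
    finally show ?thesis .
  qed
  have mem: "sing_num k (Tf \<omega> N) \<in> H" if "N > 0" for N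
  proof -
    have "sing_num k (\<lambda>x. Pm N (mult_op (Aop \<omega>) (Aop \<omega>) (Qm N x))) \<in> H"
      unfolding H_def using P_contr[OF that] Q_contr[OF that] by blast
    thus ?thesis unfolding T_eq[OF that assms] .
  qed
  have bdd: "bdd_above H" by (rule bdd_aboveI[where M=1]) (rule le1)
  have ne: "H \<noteq> {}" using mem[of 1] by auto
  show "hilbert_num k (mult_op (Aop \<omega>) (Aop \<omega>)) \<le> 1" unfolding hn by (rule cSup_least[OF ne le1])
  fix N :: nat assume N: "N > 0" "k < N*N"
  have "sig \<omega> N \<le> sing_num k (Tf \<omega> N)" by (rule Tf_lower[OF N(1) assms N(2)])
  also have "\<dots> \<le> Sup H" by (rule cSup_upper[OF mem[OF N(1)] bdd])
  finally show "sig \<omega> N \<le> hilbert_num k (mult_op (Aop \<omega>) (Aop \<omega>))" unfolding hn .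
qed

lemma asym: assumes "0 < \<omega>" "\<omega> < 1"
  shows "\<exists>s0. \<forall>s\<ge>s0. D * (real s + 1)^3 * \<omega>^s < 1"
proof -
  define \<theta> where "\<theta> = root 3 \<omega>"
  have th3: "\<theta> ^ 3 = \<omega>" unfolding \<theta>_def using assms by (simp add: real_root_pow_pos2)
  have thp: "0 < \<theta>" unfolding \<theta>_def using assms by simp
  have th1: "\<theta> < 1" unfolding \<theta>_def using assms by simp
  have l1: "(\<lambda>s. of_nat s * \<theta> ^ s) \<longlonglongrightarrow> 0" by (rule powser_times_n_limit_0) (use thp th1 in simp)
  have l2: "(\<lambda>s. \<theta> ^ s) \<longlonglongrightarrow> 0" using thp th1 by (intro LIMSEQ_power_zero) auto
  have l3: "(\<lambda>s. of_nat s * \<theta> ^ s + \<theta> ^ s) \<longlonglongrightarrow> 0 + 0" by (intro tendsto_add l1 l2)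
  have l4: "(\<lambda>s. \<bar>D\<bar> * (of_nat s * \<theta> ^ s + \<theta> ^ s) ^ 3) \<longlonglongrightarrow> \<bar>D\<bar> * (0 + 0) ^ 3"
    by (intro tendsto_mult tendsto_const tendsto_power l3)
  hence "\<forall>\<^sub>F s in sequentially. \<bar>D\<bar> * (of_nat s * \<theta> ^ s + \<theta> ^ s) ^ 3 < 1"
    by (intro order_tendstoD(2)) auto
  then obtain s0 where s0: "\<And>s. s \<ge> s0 \<Longrightarrow> \<bar>D\<bar> * (of_nat s * \<theta> ^ s + \<theta> ^ s) ^ 3 < 1"
    unfolding eventually_sequentially by blast
  have "D * (real s + 1)^3 * \<omega>^s < 1" if "s \<ge> s0" for s
  proof -
    have eq: "(of_nat s * \<theta> ^ s + \<theta> ^ s) ^ 3 = (real s + 1)^3 * \<omega>^s"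
    proof -
      have "(of_nat s * \<theta> ^ s + \<theta> ^ s) ^ 3 = (real s + 1)^3 * (\<theta> ^ s) ^ 3"
      proof -
        have "of_nat s * \<theta> ^ s + \<theta> ^ s = (real s + 1) * \<theta> ^ s" by (simp add: algebra_simps)
        thus ?thesis by (simp only: power_mult_distrib)
      qed
      also have "(\<theta> ^ s) ^ 3 = \<omega> ^ s" unfolding th3[symmetric] by (simp add: power_mult[symmetric] mult.commute)
      finally show ?thesis .
    qed
    have nn: "0 \<le> (real s + 1)^3 * \<omega>^s" using assms by simp
    have "D * ((real s + 1)^3 * \<omega>^s) \<le> \<bar>D\<bar> * ((real s + 1)^3 * \<omega>^s)"
      using nn by (intro mult_right_mono) auto
    also have "\<dots> < 1" using s0[OF that] unfolding eq .
    finally show ?thesis by (simp add: mult.assoc)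
  qed
  thus ?thesis by blast
qed

lemma sig_pos: assumes "0 < \<omega>" "N > 0" shows "0 < sig \<omega> N"
  unfolding sig_def using assms by simp

lemma h_notin: assumes "0 < \<omega>" "\<omega> < 1"
  shows "(\<lambda>k. complex_of_real (hilbert_num k (mult_op (Aop \<omega>) (Aop \<omega>))))
        \<notin> principal_calkin (\<lambda>k. complex_of_real (\<omega> ^ k))"
proof
  define h where "h = (\<lambda>k. complex_of_real (hilbert_num k (mult_op (Aop \<omega>) (Aop \<omega>))))"
  assume "(\<lambda>k. complex_of_real (hilbert_num k (mult_op (Aop \<omega>) (Aop \<omega>))))
        \<in> principal_calkin (\<lambda>k. complex_of_real (\<omega> ^ k))"
  hence "h \<in> principal_calkin (wseq \<omega>)" unfolding h_def wseq_def .
  hence "h \<in> Iw \<omega>" by (rule principal_Iw[OF assms])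
  then obtain C m where Cm: "\<And>n. rearr h (m * n) \<le> C * \<omega> ^ n" unfolding Iw_def by blast
  have hnn: "0 \<le> hilbert_num k (mult_op (Aop \<omega>) (Aop \<omega>))" for k
  proof -
    have "k < Suc k * Suc k" by simp
    hence "sig \<omega> (Suc k) \<le> hilbert_num k (mult_op (Aop \<omega>) (Aop \<omega>))"
      by (intro hil_bounds(2)[OF assms]) auto
    moreover have "0 < sig \<omega> (Suc k)" by (rule sig_pos[OF assms(1)]) simp
    ultimately show ?thesis by linarith
  qed
  have hk: "cmod (h k) = hilbert_num k (mult_op (Aop \<omega>) (Aop \<omega>))" for k
    unfolding h_def using hnn[of k] by simp
  have hb: "bdds h" unfolding bdds_def using hil_bounds(1)[OF assms] hk by metis
  have key: "sig \<omega> N \<le> rearr h j" if N: "N > 0" "j < N*N" for N j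
  proof (rule rearr_lower)
    fix J :: "nat set" assume J: "finite J" "card J \<le> j"
    have "\<exists>t\<le>j. t \<notin> J"
    proof (rule ccontr)
      assume "\<not> (\<exists>t\<le>j. t \<notin> J)"
      hence "{..j} \<subseteq> J" by auto
      hence "card {..j} \<le> card J" by (rule card_mono[OF J(1)])
      thus False using J(2) by simp
    qed
    then obtain t where t: "t \<le> j" "t \<notin> J" by blast
    have "t < N*N" using t N by linarith
    hence "sig \<omega> N \<le> hilbert_num t (mult_op (Aop \<omega>) (Aop \<omega>))" by (rule hil_bounds(2)[OF assms N(1)])
    also have "\<dots> = cmod (h t)" by (rule hk[symmetric])
    also have "\<dots> \<le> Sfun h J" by (rule Sfun_upper[OF hb t(2)])
    finally show "sig \<omega> N \<le> Sfun h J" .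
  qed
  obtain s0 where s0: "\<And>s. s \<ge> s0 \<Longrightarrow> C * (real s + 1)^3 * \<omega>^s < 1" using asym[OF assms, of C] by blast
  define r where "r = s0 + 3"
  define s where "s = (m + 1) * r"
  define n where "n = s * r"
  have r3: "3 \<le> r" unfolding r_def by simp
  have sr: "s0 \<le> s" unfolding s_def r_def by simp
  have mn: "m * n < (s+1) * (s+1)"
  proof -
    have "m * n = m * ((m + 1) * r * r)" unfolding n_def s_def by (simp add: mult.assoc)
    also have "\<dots> \<le> (m + 1) * ((m + 1) * r * r)" by (rule mult_le_mono1) simp
    also have "\<dots> = s * s" unfolding s_def by (simp add: algebra_simps)
    also have "\<dots> < (s+1) * (s+1)" by (simp add: mult_strict_mono)
    finally show ?thesis .
  qed
  have "sig \<omega> (s+1) \<le> rearr h (m * n)" by (rule key) (use mn in auto)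
  also have "\<dots> \<le> C * \<omega> ^ n" by (rule Cm)
  finally have A: "sig \<omega> (s+1) \<le> C * \<omega> ^ n" .
  define a where "a = \<omega> ^ s"
  define q where "q = (real s + 1)^3"
  have ap: "0 < a" unfolding a_def using assms by simp
  have qp: "0 < q" unfolding q_def by simp
  have cube: "real ((s+1)*(s+1)*(s+1)) = (real s + 1)^3"
    by (simp only: of_nat_mult of_nat_add of_nat_1 power3_eq_cube)
  have sg: "sig \<omega> (s+1) = a * a / q"
    unfolding sig_def a_def q_def add_diff_cancel_right' cube ..
  have sgp: "0 < a * a / q" using ap qp by simp
  show False
  proof (cases "C \<le> 0")
    case True
    hence "C * \<omega> ^ n \<le> 0" using assms by (simp add: mult_nonpos_nonneg)
    thus False using A sg sgp by linarith
  next
    case False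
    have "3 * s \<le> n" unfolding n_def using r3 by (simp add: mult.commute)
    hence "\<omega> ^ n \<le> \<omega> ^ (3 * s)" using assms by (intro power_decreasing) auto
    also have "\<omega> ^ (3 * s) = a * a * a"
    proof -
      have e: "3 * s = s + s + s" by simp
      show ?thesis unfolding a_def e power_add ..
    qed
    finally have "C * \<omega> ^ n \<le> C * (a * a * a)" using False by (intro mult_left_mono) auto
    also have "C * (a * a * a) = (C * q * a) * (a * a / q)" using qp by (simp add: field_simps)
    also have "\<dots> < 1 * (a * a / q)"
      by (rule mult_strict_right_mono[OF _ sgp]) (use s0[OF sr] in \<open>simp add: a_def q_def\<close>)
    finally show False using A sg by linarith
  qed
qed

theorem proposition4p8:
  fixes \<omega> :: real
  assumes "0 < \<omega>" and "\<omega> < 1"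
  shows "\<exists>A\<in>bop.
     (\<lambda>k. complex_of_real (sing_num k A)) \<in> principal_calkin (\<lambda>k. complex_of_real (\<omega> ^ k))
   \<and> (\<lambda>k. complex_of_real (hilbert_num k (mult_op A A)))
        \<notin> principal_calkin (\<lambda>k. complex_of_real (\<omega> ^ k))"
  using Aop_bop[OF assms] first_part[OF assms] h_notin[OF assms] by blast

end
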